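(* Let $(S,K,I)$ be a split graph with $2\le|K|\le|I|$ and $K=\bigcup_{v\in I}N_S(v)$. Let $(R,K,I)$ be a split graph on the same vertex set, with the same clique $K$ and independent set $I$, such that $\deg_R(v)=1$ for all $v\in I$, $K=\bigcup_{v\in I}N_R(v)$, and for all distinct $u,v\in I$: $u,v$ are twins in $R$ (i.e. $N_R(u)=N_R(v)$) if and only if $\sigma_{uv}(S)=0$. Then $S$ is active and $\Phi(S)$ is simple and connected if and only if $S$ is isomorphic to $R$ or to $\overline{R^{\iota}}$.
   Context: All graphs are finite and simple. A split graph is a graph $S$ whose vertex set is a disjoint union $V(S)=K\,\dot\cup\,I$ with $K$ a clique and $I$ an independent set; $(K,I)$ is called a bipartition of $S$, and $(S,K,I)$ denotes $S$ together with this fixed bipartition. A 2-switch in a graph $G$ is performed on four distinct vertices $a,b,c,d$ with $ab,cd\in E(G)$ and $ac,bd\notin E(G)$: it deletes $ab,cd$ and adds $ac,bd$; $a,b,c,d$ are said to participate in it. A vertex is active in $G$ if it participates in some 2-switch on $G$; $G$ is active if all its vertices are active. For a split graph $(S,K,I)$ and distinct $u,v\in I$, $\sigma_{uv}(S)$ is the number of induced subgraphs of $S$ isomorphic to $P_4$ containing both $u$ and $v$. The factor graph $\Phi(S)$ is the loopless multigraph with vertex set $I$ having exactly $\sigma_{uv}(S)$ parallel edges between $u$ and $v$; it is simple if $\sigma_{uv}(S)\in\{0,1\}$ for all $u,v$. Graph notions (connected, complete, etc.) applied to $\Phi(S)$ refer to its underlying simple graph, in which $u\sim v$ iff $\sigma_{uv}(S)\ge1$.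 Two vertices $u,v$ of a graph $G$ are twins if $N_G(u)\setminus\{v\}=N_G(v)\setminus\{u\}$. Inversion: for a split graph $(R,K,I)$, its inverse is the split graph $(R^{\iota},I,K)$ on the same vertex set with $E(R^{\iota})=(E(R)\setminus\{ab:a,b\in K\})\cup\{ab: a,b\in I,\ a\neq b\}$. $\overline{G}$ denotes the complement of $G$; thus $\overline{R^{\iota}}$ has clique $K$, independent set $I$, and $N_{\overline{R^{\iota}}}(v)=K\setminus N_R(v)$ for $v\in I$. *)

theory Defs
  imports Main
begin

definition graph :: "'a set \<Rightarrow> 'a set set \<Rightarrow> bool" where
  "graph V E \<longleftrightarrow> finite V \<and> (\<forall>e\<in>E. e \<subseteq> V \<and> card e = 2)"

definition nbhd :: "'a set set \<Rightarrow> 'a \<Rightarrow> 'a set" where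
  "nbhd E v = {u. {u, v} \<in> E}"

definition deg :: "'a set set \<Rightarrow> 'a \<Rightarrow> nat" where
  "deg E v = card (nbhd E v)"

definition split_graph :: "'a set \<Rightarrow> 'a set set \<Rightarrow> 'a set \<Rightarrow> 'a set \<Rightarrow> bool" where
  "split_graph V E K I \<longleftrightarrow> graph V E \<and> K \<inter> I = {} \<and> K \<union> I = V
     \<and> (\<forall>a\<in>K. \<forall>b\<in>K. a \<noteq> b \<longrightarrow> {a, b} \<in> E)
     \<and> (\<forall>a\<in>I. \<forall>b\<in>I. {a, b} \<notin> E)"

text \<open>x participates in some 2-switch on G: a,b,c,d distinct, ab, cd edges,
ac, bd non-edges.\<close>
definition active_vertex :: "'a set \<Rightarrow> 'a set set \<Rightarrow> 'a \<Rightarrow> bool" where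
  "active_vertex V E x \<longleftrightarrow> (\<exists>a b c d. a \<in> V \<and> b \<in> V \<and> c \<in> V \<and> d \<in> V
      \<and> distinct [a, b, c, d] \<and> {a, b} \<in> E \<and> {c, d} \<in> E
      \<and> {a, c} \<notin> E \<and> {b, d} \<notin> E \<and> x \<in> {a, b, c, d})"

definition active :: "'a set \<Rightarrow> 'a set set \<Rightarrow> bool" where
  "active V E \<longleftrightarrow> (\<forall>x\<in>V. active_vertex V E x)"

definition induces_P4 :: "'a set set \<Rightarrow> 'a set \<Rightarrow> bool" where
  "induces_P4 E X \<longleftrightarrow> (\<exists>a b c d. X = {a, b, c, d} \<and> distinct [a, b, c, d]
      \<and> {a, b} \<in> E \<and> {b, c} \<in> E \<and> {c, d} \<in> E
      \<and> {a, c} \<notin> E \<and> {a, d} \<notin> E \<and> {b, d} \<notin> E)"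

text \<open>sigma_uv(S): number of induced P4 subgraphs containing u and v
(an induced subgraph is determined by its vertex set).\<close>
definition sigma :: "'a set \<Rightarrow> 'a set set \<Rightarrow> 'a \<Rightarrow> 'a \<Rightarrow> nat" where
  "sigma V E u v = card {X. X \<subseteq> V \<and> induces_P4 E X \<and> u \<in> X \<and> v \<in> X}"

text \<open>Factor graph Phi(S) on vertex set I: simple, and connected (underlying
simple graph).\<close>
definition factor_simple :: "'a set \<Rightarrow> 'a set set \<Rightarrow> 'a set \<Rightarrow> bool" where
  "factor_simple V E I \<longleftrightarrow> (\<forall>u\<in>I. \<forall>v\<in>I. u \<noteq> v \<longrightarrow> sigma V E u v \<le> 1)"

definition factor_adj :: "'a set \<Rightarrow> 'a set set \<Rightarrow> 'a set \<Rightarrow> 'a \<Rightarrow> 'a \<Rightarrow> bool" where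
  "factor_adj V E I u v \<longleftrightarrow> u \<in> I \<and> v \<in> I \<and> u \<noteq> v \<and> sigma V E u v \<ge> 1"

definition factor_connected :: "'a set \<Rightarrow> 'a set set \<Rightarrow> 'a set \<Rightarrow> bool" where
  "factor_connected V E I \<longleftrightarrow> I \<noteq> {} \<and> (\<forall>u\<in>I. \<forall>v\<in>I. (factor_adj V E I)\<^sup>*\<^sup>* u v)"

definition twins :: "'a set set \<Rightarrow> 'a \<Rightarrow> 'a \<Rightarrow> bool" where
  "twins E u v \<longleftrightarrow> nbhd E u - {v} = nbhd E v - {u}"

definition graph_iso :: "'a set \<Rightarrow> 'a set set \<Rightarrow> 'b set \<Rightarrow> 'b set set \<Rightarrow> bool" where
  "graph_iso V E W F \<longleftrightarrow> (\<exists>f. bij_betw f V W \<and>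
      (\<forall>x\<in>V. \<forall>y\<in>V. {x, y} \<in> E \<longleftrightarrow> {f x, f y} \<in> F))"

definition complement :: "'a set \<Rightarrow> 'a set set \<Rightarrow> 'a set set" where
  "complement V E = {{a, b} | a b. a \<in> V \<and> b \<in> V \<and> a \<noteq> b} - E"

definition inverse :: "'a set set \<Rightarrow> 'a set \<Rightarrow> 'a set \<Rightarrow> 'a set set" where
  "inverse E K I = (E - {{a, b} | a b. a \<in> K \<and> b \<in> K}) \<union> {{a, b} | a b. a \<in> I \<and> b \<in> I \<and> a \<noteq> b}"

end

theory Submission
  imports Defs
begin


lemma sg_edge_V: "split_graph V E K I \<Longrightarrow> {x,y} \<in> E \<Longrightarrow> x \<in> V \<and> y \<in> V"
  unfolding split_graph_def graph_def by blast

lemma sg_edge_neq: "split_graph V E K I \<Longrightarrow> {x,y} \<in> E \<Longrightarrow> x \<noteq> y"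
  unfolding split_graph_def graph_def by fastforce

lemma sg_fin: "split_graph V E K I \<Longrightarrow> finite V \<and> finite K \<and> finite I"
  unfolding split_graph_def graph_def by (meson finite_Un)

lemma sg_KI: "split_graph V E K I \<Longrightarrow> x \<in> V \<Longrightarrow> (x \<in> K \<longleftrightarrow> x \<notin> I)"
  unfolding split_graph_def by blast

lemma sg_V: "split_graph V E K I \<Longrightarrow> V = K \<union> I"
  unfolding split_graph_def by blast

lemma sg_cl: "split_graph V E K I \<Longrightarrow> a \<in> K \<Longrightarrow> b \<in> K \<Longrightarrow> a \<noteq> b \<Longrightarrow> {a,b} \<in> E"
  unfolding split_graph_def by blast

lemma sg_ind: "split_graph V E K I \<Longrightarrow> a \<in> I \<Longrightarrow> b \<in> I \<Longrightarrow> {a,b} \<notin> E"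
  unfolding split_graph_def by blast

lemma sg_nbhd_I: "split_graph V E K I \<Longrightarrow> v \<in> I \<Longrightarrow> nbhd E v \<subseteq> K"
  unfolding nbhd_def using sg_edge_V sg_KI sg_ind by fastforce

lemma sg_nbhd_V: "split_graph V E K I \<Longrightarrow> nbhd E v \<subseteq> V"
  unfolding nbhd_def using sg_edge_V by fastforce

lemma nb_iff: "u \<in> nbhd E v \<longleftrightarrow> {v,u} \<in> E"
  unfolding nbhd_def by (simp add: insert_commute)

lemma sigma_split:
  assumes S: "split_graph V E K I" and u: "u \<in> I" and v: "v \<in> I" and uv: "u \<noteq> v"
  shows "sigma V E u v = card (nbhd E u - nbhd E v) * card (nbhd E v - nbhd E u)"
proof -
  let ?A = "nbhd E u - nbhd E v" and ?B = "nbhd E v - nbhd E u"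
  let ?f = "\<lambda>(b,c). {u,b,c,v}"
  have NuK: "nbhd E u \<subseteq> K" and NvK: "nbhd E v \<subseteq> K" using sg_nbhd_I[OF S u] sg_nbhd_I[OF S v] by auto
  have fin: "finite V" "finite K" "finite I" using sg_fin[OF S] by auto
  have KI: "K \<inter> I = {}" using S unfolding split_graph_def by blast
  have eq: "{X. X \<subseteq> V \<and> induces_P4 E X \<and> u \<in> X \<and> v \<in> X} = ?f ` (?A \<times> ?B)"
  proof (rule set_eqI, rule iffI)
    fix X assume "X \<in> {X. X \<subseteq> V \<and> induces_P4 E X \<and> u \<in> X \<and> v \<in> X}"
    then have XV: "X \<subseteq> V" and P: "induces_P4 E X" and uX: "u \<in> X" and vX: "v \<in> X" by auto
    from P obtain a b c d where X: "X = {a,b,c,d}" and dist: "distinct [a,b,c,d]"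
      and e1: "{a,b} \<in> E" and e2: "{b,c} \<in> E" and e3: "{c,d} \<in> E"
      and n1: "{a,c} \<notin> E" and n2: "{a,d} \<notin> E" and n3: "{b,d} \<notin> E"
      unfolding induces_P4_def by blast
    have V4: "a \<in> V" "b \<in> V" "c \<in> V" "d \<in> V" using XV X by auto
    have aI: "a \<in> I"
    proof (rule ccontr)
      assume "a \<notin> I"
      then have "a \<in> K" using sg_KI[OF S] V4 by blast
      then have "c \<notin> K" "d \<notin> K" using sg_cl[OF S] n1 n2 dist by auto
      then have "c \<in> I" "d \<in> I" using sg_KI[OF S] V4 by auto
      then show False using sg_ind[OF S] e3 by blast
    qed
    have bK: "b \<in> K" using aI e1 sg_ind[OF S] sg_KI[OF S] V4 by blast
    have dI: "d \<in> I" using bK n3 sg_cl[OF S] sg_KI[OF S] V4 dist by force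
    have cK: "c \<in> K" using dI e3 sg_ind[OF S] sg_KI[OF S] V4 by blast
    have ud: "(u = a \<and> v = d) \<or> (u = d \<and> v = a)"
      using uX vX X u v bK cK KI uv by auto
    then show "X \<in> ?f ` (?A \<times> ?B)"
    proof
      assume h: "u = a \<and> v = d"
      have "b \<in> ?A" "c \<in> ?B" using h e1 n3 e3 n1 by (auto simp: nb_iff insert_commute)
      moreover have "X = ?f (b,c)" using h X by auto
      ultimately show ?thesis by blast
    next
      assume h: "u = d \<and> v = a"
      have "c \<in> ?A" "b \<in> ?B" using h e1 n3 e3 n1 by (auto simp: nb_iff insert_commute)
      moreover have "X = ?f (c,b)" using h X by auto
      ultimately show ?thesis by blast
    qed
  next
    fix X assume "X \<in> ?f ` (?A \<times> ?B)"
    then obtain b c where b: "b \<in> ?A" and c: "c \<in> ?B" and X: "X = {u,b,c,v}" by auto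
    have bK: "b \<in> K" and cK: "c \<in> K" using b c NuK NvK by auto
    have "distinct [u,b,c,v]" using b c bK cK u v KI uv by auto
    moreover have "{u,b} \<in> E" "{b,c} \<in> E" "{c,v} \<in> E" "{u,c} \<notin> E" "{u,v} \<notin> E" "{b,v} \<notin> E"
      using b c bK cK sg_cl[OF S] sg_ind[OF S] u v
      by (auto simp: nb_iff insert_commute)
    ultimately have "induces_P4 E X" unfolding induces_P4_def X by blast
    moreover have "X \<subseteq> V" using X bK cK u v sg_V[OF S] by auto
    ultimately show "X \<in> {X. X \<subseteq> V \<and> induces_P4 E X \<and> u \<in> X \<and> v \<in> X}" using X by auto
  qed
  have inj: "inj_on ?f (?A \<times> ?B)"
  proof (rule inj_onI)
    fix p q assume p: "p \<in> ?A \<times> ?B" and q: "q \<in> ?A \<times> ?B" and fpq: "?f p = ?f q"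
    obtain b c where pbc: "p = (b,c)" by fastforce
    obtain b' c' where qbc: "q = (b',c')" by fastforce
    have b: "b \<in> ?A" and c: "c \<in> ?B" using p pbc by auto
    have b': "b' \<in> ?A" and c': "c' \<in> ?B" using q qbc by auto
    have eqs: "{u,b,c,v} = {u,b',c',v}" using fpq pbc qbc by simp
    have K4: "b \<in> K" "c \<in> K" "b' \<in> K" "c' \<in> K" using b c b' c' NuK NvK by auto
    have "b' \<in> {u,b,c,v}" using eqs by auto
    then have 1: "b' = b" using K4 u v KI b' c by auto
    have "c' \<in> {u,b,c,v}" using eqs by auto
    then have 2: "c' = c" using K4 u v KI c' b by auto
    show "p = q" using 1 2 pbc qbc by simp
  qed
  have finA: "finite ?A" "finite ?B" using NuK NvK fin finite_subset by blast+
  show ?thesis by (simp only: sigma_def eq card_image[OF inj] card_cartesian_product)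
qed



lemma card_diff_eq:
  assumes "finite A" "finite B" "card (A - B) = card (B - A)"
  shows "card A = card B"
proof -
  have "card A = card (A \<inter> B) + card (A - B)" using card_Int_Diff assms(1) by blast
  moreover have "card B = card (B \<inter> A) + card (B - A)" using card_Int_Diff assms(2) by blast
  ultimately show ?thesis using assms(3) by (simp add: Int_commute)
qed

lemma one_elem: "card S = 1 \<Longrightarrow> x \<in> S \<Longrightarrow> S = {x}"
  by (metis card_1_singletonE singletonD)

lemma two_elems: "finite K \<Longrightarrow> 2 \<le> card K \<Longrightarrow> \<exists>a\<in>K. \<exists>b\<in>K. a\<noteq>b"
  using card_le_Suc0_iff_eq by fastforce

lemma family:
  fixes F :: "'k \<Rightarrow> 'k set"
  assumes fin: "finite K" and cK: "2 \<le> card K"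
    and sub: "\<forall>k\<in>K. F k \<subseteq> K"
    and d1: "\<forall>k\<in>K. \<forall>k'\<in>K. k \<noteq> k' \<longrightarrow> card (F k - F k') = 1"
    and un: "(\<Union>k\<in>K. F k) = K"
  shows "(\<forall>k\<in>K. card (F k) = 1) \<or> (\<forall>k\<in>K. card (F k) = card K - 1)"
proof -
  have finF: "\<And>k. k \<in> K \<Longrightarrow> finite (F k)" using sub fin finite_subset by blast
  obtain k1 k2 where k12: "k1 \<in> K" "k2 \<in> K" "k1 \<noteq> k2"
    using two_elems[OF fin cK] by blast
  define A where "A = F k1"
  define B where "B = F k2"
  define d where "d = card A"
  have allc: "\<forall>k\<in>K. card (F k) = d"
  proof
    fix k assume k: "k \<in> K"
    show "card (F k) = d"
    proof (cases "k = k1")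
      case True then show ?thesis by (simp add: d_def A_def)
    next
      case False
      then show ?thesis using card_diff_eq[OF finF[OF k] finF[OF k12(1)]] d1 k k12
        by (simp add: d_def A_def)
    qed
  qed
  have finA: "finite A" "finite B" using finF k12 A_def B_def by auto
  have AB1: "card (A - B) = 1" "card (B - A) = 1" using d1 k12 A_def B_def by auto
  have cAB: "card (A \<inter> B) = d - 1" using card_Int_Diff[OF finA(1), of B] AB1 d_def by simp
  have d0: "d \<ge> 1" using AB1(1) card_mono[OF finA(1), of "A - B"] d_def by auto
  show ?thesis
  proof (cases "d = 1")
    case True then show ?thesis using allc by simp
  next
    case False
    then have d2: "d \<ge> 2" using d0 by simp
    have KAB: "K \<subseteq> A \<union> B"
    proof (rule ccontr)
      assume "\<not> K \<subseteq> A \<union> B"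
      then obtain x where x: "x \<in> K" "x \<notin> A \<union> B" by blast
      then obtain k where k: "k \<in> K" "x \<in> F k" using un by blast
      have kk1: "k \<noteq> k1" "k \<noteq> k2" using k x A_def B_def by auto
      have "card (F k - A) = 1" using d1 k kk1 k12 A_def by auto
      then have FA: "F k - A = {x}" using k x one_elem[of "F k - A" x] by blast
      have "card (F k - B) = 1" using d1 k kk1 k12 B_def by auto
      then have FB: "F k - B = {x}" using k x one_elem[of "F k - B" x] by blast
      have Fk_sub: "F k \<subseteq> insert x (A \<inter> B)" using FA FB by blast
      have "card (insert x (A \<inter> B)) = d" using cAB x finA d0 by simp
      then have Fk: "F k = insert x (A \<inter> B)"
        using card_subset_eq[OF _ Fk_sub] allc k finA by simp
      have allC: "\<forall>j\<in>K. A \<inter> B \<subseteq> F j"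
      proof (intro ballI subsetI)
        fix j c assume j: "j \<in> K" and c: "c \<in> A \<inter> B"
        show "c \<in> F j"
        proof (rule ccontr)
          assume cj: "c \<notin> F j"
          have jj: "j \<noteq> k1" "j \<noteq> k2" "j \<noteq> k" using cj c Fk A_def B_def by auto
          have "card (A - F j) = 1" using d1 j jj k12 A_def by auto
          then have "A - F j = {c}" using c cj one_elem[of "A - F j" c] by blast
          moreover have "card (B - F j) = 1" using d1 j jj k12 B_def by auto
          then have "B - F j = {c}" using c cj one_elem[of "B - F j" c] by blast
          ultimately have sub1: "(A \<union> B) - {c} \<subseteq> F j" by blast
          have "card (A \<union> B) = d + 1"
          proof -
            have "A \<union> B = A \<union> (B - A)" by blast
            moreover have "card (A \<union> (B - A)) = card A + card (B - A)"
              by (rule card_Un_disjoint) (use finA in auto)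
            ultimately have "card (A \<union> B) = card A + card (B - A)" by simp
            then show ?thesis using AB1 d_def by simp
          qed
          then have "card ((A \<union> B) - {c}) = d" using c finA by simp
          then have Fj: "F j = (A \<union> B) - {c}"
            using card_subset_eq[OF finF[OF j] sub1] allc j by simp
          have "{c, x} \<subseteq> F k - F j" using Fj Fk c x by auto
          moreover have "c \<noteq> x" using c x by auto
          then have "card {c,x} = 2" by simp
          moreover have "card (F k - F j) = 1" using d1 k(1) j jj by auto
          ultimately show False using card_mono[of "F k - F j" "{c,x}"] finF[OF k(1)] by simp
        qed
      qed
      let ?C = "A \<inter> B"
      let ?G = "\<lambda>j. F j - ?C"
      have injG: "inj_on ?G K"
      proof (rule inj_onI)
        fix i j assume i: "i \<in> K" and j: "j \<in> K" and eq: "?G i = ?G j"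
        have "F i = ?G i \<union> ?C" "F j = ?G j \<union> ?C" using allC i j by auto
        then have "F i = F j" using eq by simp
        then show "i = j" using d1 i j by fastforce
      qed
      have Gsub: "?G ` K \<subseteq> (\<lambda>y. {y}) ` (K - ?C)"
      proof
        fix Y assume "Y \<in> ?G ` K"
        then obtain j where j: "j \<in> K" "Y = ?G j" by blast
        have "card (?G j) = 1"
          using card_Diff_subset[of ?C "F j"] allC j allc cAB finA d0 by simp
        then obtain y where "?G j = {y}" by (meson card_1_singletonE)
        moreover have "y \<in> K - ?C" using calculation sub j by blast
        ultimately show "Y \<in> (\<lambda>y. {y}) ` (K - ?C)" using j by blast
      qed
      have "card K = card (?G ` K)" using card_image[OF injG] by simp
      also have "\<dots> \<le> card ((\<lambda>y. {y}) ` (K - ?C))" using card_mono[OF _ Gsub] fin by simp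
      also have "\<dots> \<le> card (K - ?C)" using card_image_le fin by blast
      also have "\<dots> = card K - card ?C"
        by (rule card_Diff_subset) (use finA k12 sub A_def in auto)
      finally have "card K \<le> card K - (d - 1)" using cAB by simp
      then show False using d2 cK by linarith
    qed
    have "card K \<le> d + 1"
    proof -
      have "A \<union> B = A \<union> (B - A)" by blast
      moreover have "card (A \<union> (B - A)) = card A + card (B - A)"
        by (rule card_Un_disjoint) (use finA in auto)
      ultimately have "card (A \<union> B) = card A + card (B - A)" by simp
      then show ?thesis using card_mono[OF _ KAB] finA AB1 d_def by simp
    qed
    moreover have "d < card K"
    proof -
      have "A \<subseteq> K" using sub k12 A_def by auto
      moreover have "B - A \<noteq> {}" using AB1(2) by (metis card.empty zero_neq_one)
      then have "A \<noteq> K" using sub k12 B_def by auto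
      ultimately have "A \<subset> K" by blast
      then show ?thesis using psubset_card_mono fin d_def by blast
    qed
    ultimately have "d = card K - 1" by simp
    then show ?thesis using allc by simp
  qed
qed



lemma iso_split:
  assumes S1: "split_graph V E1 K I" and S2: "split_graph V E2 K I" and g: "bij_betw g K K"
    and h: "\<forall>v\<in>I. \<forall>k\<in>K. {v,k} \<in> E1 \<longleftrightarrow> {v, g k} \<in> E2"
  shows "graph_iso V E1 V E2"
proof -
  define f where "f x = (if x \<in> K then g x else x)" for x
  have KI: "K \<inter> I = {}" and V: "V = K \<union> I" using S1 unfolding split_graph_def by auto
  have b1: "bij_betw f K K" by (subst bij_betw_cong[of K f g]) (simp_all add: f_def g)
  have b2: "bij_betw f I I"
  proof (subst bij_betw_cong[of I f id])
    show "\<And>a. a \<in> I \<Longrightarrow> f a = id a" using KI by (auto simp: f_def)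
    show "bij_betw id I I" by simp
  qed
  have bf: "bij_betw f V V" using bij_betw_combine[OF b1 b2 KI] V by simp
  have injg: "inj_on g K" and gK: "\<And>x. x \<in> K \<Longrightarrow> g x \<in> K" using g bij_betw_def by (auto dest: bij_betwE)
  have pres: "\<forall>x\<in>V. \<forall>y\<in>V. {x, y} \<in> E1 \<longleftrightarrow> {f x, f y} \<in> E2"
  proof (intro ballI)
    fix x y assume x: "x \<in> V" and y: "y \<in> V"
    show "{x, y} \<in> E1 \<longleftrightarrow> {f x, f y} \<in> E2"
    proof (cases "x \<in> K")
      case xK: True
      show ?thesis
      proof (cases "y \<in> K")
        case yK: True
        show ?thesis
        proof (cases "x = y")
          case True
          then show ?thesis using sg_edge_neq[OF S1, of x x] sg_edge_neq[OF S2, of "f x" "f x"] by blast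
        next
          case False
          then have "g x \<noteq> g y" using injg xK yK inj_on_def by metis
          have c2: "{f x, f y} = {g x, g y}" using xK yK by (auto simp: f_def)
          show ?thesis unfolding c2 using sg_cl[OF S1 xK yK False] sg_cl[OF S2 gK[OF xK] gK[OF yK]] \<open>g x \<noteq> g y\<close> by blast
        qed
      next
        case yK: False
        then have yI: "y \<in> I" using y V by auto
        have c1: "{x,y} = {y,x}" by blast
        have c2: "{f x, f y} = {y, g x}" using xK yK by (auto simp: f_def)
        show ?thesis unfolding c1 c2 using h yI xK by blast
      qed
    next
      case xK: False
      then have xI: "x \<in> I" using x V by auto
      show ?thesis
      proof (cases "y \<in> K")
        case yK: True
        have c2: "{f x, f y} = {x, g y}" using xK yK by (auto simp: f_def)
        show ?thesis unfolding c2 using h xI yK by blast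
      next
        case yK: False
        then have yI: "y \<in> I" using y V by auto
        have c2: "{f x, f y} = {x, y}" using xK yK by (auto simp: f_def)
        show ?thesis unfolding c2 using sg_ind[OF S1 xI yI] sg_ind[OF S2 xI yI] by blast
      qed
    qed
  qed
  show ?thesis unfolding graph_iso_def using bf pres by blast
qed

lemma iso_deg:
  assumes S1: "split_graph V E1 K1 I1" and S2: "split_graph V E2 K2 I2" and bf: "bij_betw f V V"
    and pres: "\<forall>x\<in>V. \<forall>y\<in>V. {x,y} \<in> E1 \<longleftrightarrow> {f x, f y} \<in> E2" and x: "x \<in> V"
  shows "deg E1 x = deg E2 (f x)"
proof -
  have n1: "nbhd E1 x \<subseteq> V" and n2: "nbhd E2 (f x) \<subseteq> V" using sg_nbhd_V[OF S1] sg_nbhd_V[OF S2] by auto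
  have fx: "f x \<in> V" using bf x bij_betwE by blast
  have "f ` nbhd E1 x = nbhd E2 (f x)"
  proof
    show "f ` nbhd E1 x \<subseteq> nbhd E2 (f x)"
    proof
      fix w assume "w \<in> f ` nbhd E1 x"
      then obtain u where u: "u \<in> nbhd E1 x" "w = f u" by blast
      have uV: "u \<in> V" using u n1 by auto
      have "{u,x} \<in> E1" using u unfolding nbhd_def by simp
      then have "{f u, f x} \<in> E2" using pres uV x by blast
      then show "w \<in> nbhd E2 (f x)" using u unfolding nbhd_def by simp
    qed
  next
    show "nbhd E2 (f x) \<subseteq> f ` nbhd E1 x"
    proof
      fix w assume w: "w \<in> nbhd E2 (f x)"
      then have wV: "w \<in> V" using n2 by auto
      then obtain u where u: "u \<in> V" "w = f u" using bf unfolding bij_betw_def by blast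
      have "{f u, f x} \<in> E2" using w u unfolding nbhd_def by simp
      then have "{u, x} \<in> E1" using pres u x by blast
      then have "u \<in> nbhd E1 x" unfolding nbhd_def by simp
      then show "w \<in> f ` nbhd E1 x" using u by blast
    qed
  qed
  moreover have "inj_on f (nbhd E1 x)" using bf n1 unfolding bij_betw_def by (meson inj_on_subset)
  ultimately show ?thesis unfolding deg_def by (metis card_image)
qed

lemma iso_degset:
  assumes S1: "split_graph V E1 K I" and S2: "split_graph V E2 K I" and iso: "graph_iso V E1 V E2"
    and sub: "{x\<in>V. P (deg E1 x)} \<subseteq> I" and eq: "{x\<in>V. P (deg E2 x)} = I"
  shows "\<forall>v\<in>I. P (deg E1 v)"
proof -
  obtain f where bf: "bij_betw f V V" and pres: "\<forall>x\<in>V. \<forall>y\<in>V. {x,y} \<in> E1 \<longleftrightarrow> {f x, f y} \<in> E2"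
    using iso unfolding graph_iso_def by blast
  have d: "\<And>x. x \<in> V \<Longrightarrow> deg E1 x = deg E2 (f x)" using iso_deg[OF S1 S2 bf pres] by blast
  have "f ` {x\<in>V. P (deg E1 x)} = {y\<in>V. P (deg E2 y)}"
  proof
    show "f ` {x\<in>V. P (deg E1 x)} \<subseteq> {y\<in>V. P (deg E2 y)}"
    proof
      fix y assume "y \<in> f ` {x\<in>V. P (deg E1 x)}"
      then obtain x where x: "x \<in> V" "P (deg E1 x)" "y = f x" by blast
      have "y \<in> V" using x bf bij_betwE by blast
      then show "y \<in> {y\<in>V. P (deg E2 y)}" using x d by simp
    qed
  next
    show "{y\<in>V. P (deg E2 y)} \<subseteq> f ` {x\<in>V. P (deg E1 x)}"
    proof
      fix y assume y: "y \<in> {y\<in>V. P (deg E2 y)}"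
      then obtain x where x: "x \<in> V" "y = f x" using bf unfolding bij_betw_def by blast
      then have "P (deg E1 x)" using y d by simp
      then show "y \<in> f ` {x\<in>V. P (deg E1 x)}" using x by blast
    qed
  qed
  moreover have "inj_on f {x\<in>V. P (deg E1 x)}"
    using bf unfolding bij_betw_def by (rule inj_on_subset[OF conjunct1]) auto
  ultimately have "card {x\<in>V. P (deg E1 x)} = card I" using eq card_image by metis
  moreover have "finite I" using sg_fin[OF S1] by auto
  ultimately have "{x\<in>V. P (deg E1 x)} = I" using card_subset_eq[OF _ sub] by blast
  then show ?thesis by auto
qed

lemma degK:
  assumes S: "split_graph V E K I" and k: "k \<in> K" and w: "w \<in> I" and e: "{w,k} \<in> E"
  shows "card K \<le> deg E k"
proof -
  have KI: "K \<inter> I = {}" using S unfolding split_graph_def by auto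
  have fin: "finite V" "finite K" using sg_fin[OF S] by auto
  have "insert w (K - {k}) \<subseteq> nbhd E k"
    using sg_cl[OF S] k e by (auto simp: nbhd_def)
  moreover have "finite (nbhd E k)" using sg_nbhd_V[OF S] fin finite_subset by blast
  ultimately have "card (insert w (K - {k})) \<le> deg E k" unfolding deg_def by (rule card_mono[rotated])
  moreover have "card (insert w (K - {k})) = card K"
  proof -
    have "w \<notin> K - {k}" using KI w by auto
    then have "card (insert w (K - {k})) = Suc (card (K - {k}))" using fin by simp
    also have "\<dots> = Suc (card K - 1)" using k fin by (simp add: card_Diff_singleton)
    also have "\<dots> = card K" using k fin card_gt_0_iff by (metis Suc_pred' empty_iff)
    finally show ?thesis .
  qed
  ultimately show ?thesis by simp
qed

lemma compl_sg:
  assumes R: "split_graph V ER K I"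
  shows "split_graph V (complement V (inverse ER K I)) K I"
proof -
  have KI: "K \<inter> I = {}" and V: "V = K \<union> I" and fin: "finite V" using R unfolding split_graph_def graph_def by auto
  show ?thesis unfolding split_graph_def graph_def
  proof (intro conjI ballI impI)
    show "finite V" by fact
    fix e assume "e \<in> complement V (inverse ER K I)"
    then obtain a b where "e = {a,b}" "a \<in> V" "b \<in> V" "a \<noteq> b" unfolding complement_def by blast
    then show "e \<subseteq> V" "card e = 2" by auto
  next
    show "K \<inter> I = {}" "K \<union> I = V" using KI V by auto
  next
    fix a b assume a: "a \<in> K" and b: "b \<in> K" and ab: "a \<noteq> b"
    have "{a,b} \<notin> ER - {{a, b} |a b. a \<in> K \<and> b \<in> K}" using a b by blast
    moreover have "{a,b} \<notin> {{a, b} |a b. a \<in> I \<and> b \<in> I \<and> a \<noteq> b}"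
    proof
      assume "{a,b} \<in> {{a, b} |a b. a \<in> I \<and> b \<in> I \<and> a \<noteq> b}"
      then obtain c d where "{a,b} = {c,d}" "c \<in> I" "d \<in> I" by blast
      then have "a \<in> I" by (auto simp: doubleton_eq_iff)
      then show False using a KI by blast
    qed
    ultimately have "{a,b} \<notin> inverse ER K I" unfolding inverse_def by blast
    then show "{a,b} \<in> complement V (inverse ER K I)" using a b ab V unfolding complement_def by blast
  next
    fix a b assume a: "a \<in> I" and b: "b \<in> I"
    show "{a,b} \<notin> complement V (inverse ER K I)"
    proof
      assume "{a,b} \<in> complement V (inverse ER K I)"
      then obtain c d where cd: "{a,b} = {c,d}" "c \<noteq> d" "{a,b} \<notin> inverse ER K I"
        unfolding complement_def by blast
      then have "a \<noteq> b" by (auto simp: doubleton_eq_iff)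
      then show False using a b cd(3) unfolding inverse_def by blast
    qed
  qed
qed

lemma compl_iff:
  assumes R: "split_graph V ER K I" and v: "v \<in> I" and k: "k \<in> K"
  shows "{v,k} \<in> complement V (inverse ER K I) \<longleftrightarrow> {v,k} \<notin> ER"
proof -
  have KI: "K \<inter> I = {}" and V: "V = K \<union> I" using R unfolding split_graph_def by auto
  have vk: "v \<noteq> k" using KI v k by auto
  have n1: "{v,k} \<notin> {{a, b} |a b. a \<in> K \<and> b \<in> K}"
  proof
    assume "{v,k} \<in> {{a, b} |a b. a \<in> K \<and> b \<in> K}"
    then obtain c d where "{v,k} = {c,d}" "c \<in> K" "d \<in> K" by blast
    then have "v \<in> K" by (auto simp: doubleton_eq_iff)
    then show False using v KI by blast
  qed
  have n2: "{v,k} \<notin> {{a, b} |a b. a \<in> I \<and> b \<in> I \<and> a \<noteq> b}"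
  proof
    assume "{v,k} \<in> {{a, b} |a b. a \<in> I \<and> b \<in> I \<and> a \<noteq> b}"
    then obtain c d where "{v,k} = {c,d}" "c \<in> I" "d \<in> I" by blast
    then have "k \<in> I" by (auto simp: doubleton_eq_iff)
    then show False using k KI by blast
  qed
  have "{v,k} \<in> inverse ER K I \<longleftrightarrow> {v,k} \<in> ER"
    using n1 n2 unfolding inverse_def by blast
  then show ?thesis using vk v k V unfolding complement_def by blast
qed



theorem theorem5p5:
  fixes V :: "'a set" and ES ER :: "'a set set" and K I :: "'a set"
  assumes S: "split_graph V ES K I"
    and cK: "2 \<le> card K" and cKI: "card K \<le> card I"
    and SK: "K = (\<Union>v\<in>I. nbhd ES v)"
    and R: "split_graph V ER K I"
    and Rdeg: "\<forall>v\<in>I. deg ER v = 1"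
    and RK: "K = (\<Union>v\<in>I. nbhd ER v)"
    and tw: "\<forall>u\<in>I. \<forall>v\<in>I. u \<noteq> v \<longrightarrow> (twins ER u v \<longleftrightarrow> sigma V ES u v = 0)"
  shows "(active V ES \<and> factor_simple V ES I \<and> factor_connected V ES I) \<longleftrightarrow>
         (graph_iso V ES V ER \<or> graph_iso V ES V (complement V (inverse ER K I)))"
proof -
  have fin: "finite V" "finite K" "finite I" using sg_fin[OF S] by auto
  have KI: "K \<inter> I = {}" and VKI: "V = K \<union> I" using S unfolding split_graph_def by auto
  define N where "N = nbhd ES"
  have NK: "\<And>v. v \<in> I \<Longrightarrow> N v \<subseteq> K" using sg_nbhd_I[OF S] unfolding N_def by blast
  have finN: "\<And>v. v \<in> I \<Longrightarrow> finite (N v)" using NK fin(2) finite_subset by blast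
  have sig: "\<And>u v. u \<in> I \<Longrightarrow> v \<in> I \<Longrightarrow> u \<noteq> v \<Longrightarrow> sigma V ES u v = card (N u - N v) * card (N v - N u)"
    using sigma_split[OF S] unfolding N_def by blast
  define rho where "rho v = the_elem (nbhd ER v)" for v
  have NR: "\<And>v. v \<in> I \<Longrightarrow> nbhd ER v = {rho v}"
  proof -
    fix v assume v: "v \<in> I"
    have "card (nbhd ER v) = 1" using Rdeg v unfolding deg_def by blast
    then obtain k where "nbhd ER v = {k}" by (rule card_1_singletonE)
    then show "nbhd ER v = {rho v}" by (simp add: rho_def)
  qed
  have rhoK: "\<And>v. v \<in> I \<Longrightarrow> rho v \<in> K" using NR sg_nbhd_I[OF R] by blast
  have twR: "\<And>u v. u \<in> I \<Longrightarrow> v \<in> I \<Longrightarrow> u \<noteq> v \<Longrightarrow> twins ER u v \<longleftrightarrow> rho u = rho v"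
  proof -
    fix u v assume u: "u \<in> I" and v: "v \<in> I" and uv: "u \<noteq> v"
    have "rho u \<noteq> v" "rho v \<noteq> u" using rhoK u v KI by auto
    then show "twins ER u v \<longleftrightarrow> rho u = rho v" unfolding twins_def using NR[OF u] NR[OF v] by auto
  qed
  have key: "\<And>u v. u \<in> I \<Longrightarrow> v \<in> I \<Longrightarrow> u \<noteq> v \<Longrightarrow>
      rho u = rho v \<longleftrightarrow> card (N u - N v) * card (N v - N u) = 0"
    using tw twR sig by metis
  have surj: "\<And>k. k \<in> K \<Longrightarrow> \<exists>v\<in>I. rho v = k"
  proof -
    fix k assume "k \<in> K"
    then obtain v where v: "v \<in> I" "k \<in> nbhd ER v" using RK by blast
    then have "k = rho v" using NR[OF v(1)] by simp
    then show "\<exists>v\<in>I. rho v = k" using v(1) by blast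
  qed
  define r where "r k = (SOME v. v \<in> I \<and> rho v = k)" for k
  have r: "\<And>k. k \<in> K \<Longrightarrow> r k \<in> I \<and> rho (r k) = k"
  proof -
    fix k assume "k \<in> K"
    then have "\<exists>v. v \<in> I \<and> rho v = k" using surj by blast
    then show "r k \<in> I \<and> rho (r k) = k" unfolding r_def by (rule someI_ex)
  qed
  have other: "\<And>k. k \<in> K \<Longrightarrow> \<exists>k'\<in>K. k' \<noteq> k" using two_elems[OF fin(2) cK] by metis
  have noncomp: "\<And>u v. u \<in> I \<Longrightarrow> v \<in> I \<Longrightarrow> rho u \<noteq> rho v \<Longrightarrow> N u - N v \<noteq> {} \<and> N v - N u \<noteq> {}"
  proof -
    fix u v assume u: "u \<in> I" and v: "v \<in> I" and ne: "rho u \<noteq> rho v"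
    then have "u \<noteq> v" by blast
    then have "card (N u - N v) * card (N v - N u) \<noteq> 0" using key[OF u v] ne by blast
    then have "card (N u - N v) \<noteq> 0" "card (N v - N u) \<noteq> 0" by simp_all
    then show "N u - N v \<noteq> {} \<and> N v - N u \<noteq> {}" by (metis card.empty)
  qed
  have injNr: "inj_on (\<lambda>k. N (r k)) K"
  proof (rule inj_onI)
    fix k k' assume k: "k \<in> K" and k': "k' \<in> K" and eq: "N (r k) = N (r k')"
    show "k = k'"
    proof (rule ccontr)
      assume "k \<noteq> k'"
      then have "N (r k) - N (r k') \<noteq> {}" using noncomp r k k' by metis
      then show False using eq by simp
    qed
  qed
  have adj: "\<And>u v. u \<in> I \<Longrightarrow> v \<in> I \<Longrightarrow> rho u \<noteq> rho v \<Longrightarrow> factor_adj V ES I u v"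
  proof -
    fix u v assume u: "u \<in> I" and v: "v \<in> I" and ne: "rho u \<noteq> rho v"
    then have uv: "u \<noteq> v" by blast
    then have "sigma V ES u v \<noteq> 0" using tw twR u v ne by blast
    then show "factor_adj V ES I u v" unfolding factor_adj_def using u v uv by simp
  qed
  have conn: "factor_connected V ES I"
  proof -
    obtain a where "a \<in> K" using two_elems[OF fin(2) cK] by blast
    then have "I \<noteq> {}" using r by blast
    moreover have "\<forall>u\<in>I. \<forall>v\<in>I. (factor_adj V ES I)\<^sup>*\<^sup>* u v"
    proof (intro ballI)
      fix u v assume u: "u \<in> I" and v: "v \<in> I"
      show "(factor_adj V ES I)\<^sup>*\<^sup>* u v"
      proof (cases "rho u = rho v")
        case False
        then show ?thesis using adj u v by blast
      next
        case True
        obtain k' where k': "k' \<in> K" "k' \<noteq> rho u" using other rhoK u by blast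
        have w: "r k' \<in> I" "rho (r k') \<noteq> rho u" using r k' by auto
        have "factor_adj V ES I u (r k')" using adj u w by metis
        moreover have "factor_adj V ES I (r k') v" using adj v w True by metis
        ultimately show ?thesis by (meson rtranclp.rtrancl_into_rtrancl rtranclp.rtrancl_refl)
      qed
    qed
    ultimately show ?thesis unfolding factor_connected_def by blast
  qed
  have act: "\<And>u w b c. u \<in> I \<Longrightarrow> w \<in> I \<Longrightarrow> b \<in> N u - N w \<Longrightarrow> c \<in> N w - N u \<Longrightarrow>
      active_vertex V ES u \<and> active_vertex V ES b"
  proof -
    fix u w b c assume u: "u \<in> I" and w: "w \<in> I" and b: "b \<in> N u - N w" and c: "c \<in> N w - N u"
    have bK: "b \<in> K" and cK': "c \<in> K" using b c NK u w by auto
    have dist: "distinct [u,b,c,w]" using b c bK cK' u w KI by auto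
    have c1: "{c,w} = {w,c}" "{b,w} = {w,b}" by blast+
    have e: "{u,b} \<in> ES" "{c,w} \<in> ES" "{u,c} \<notin> ES" "{b,w} \<notin> ES"
      unfolding c1 using b c by (simp_all add: N_def nb_iff)
    have inV: "u \<in> V" "b \<in> V" "c \<in> V" "w \<in> V" using VKI u w bK cK' by auto
    show "active_vertex V ES u \<and> active_vertex V ES b"
      unfolding active_vertex_def using dist e inV by blast
  qed
  have backward: "(\<forall>v\<in>I. card (N v) = 1) \<or> (\<forall>v\<in>I. card (N v) = card K - 1) \<Longrightarrow>
      active V ES \<and> factor_simple V ES I \<and> factor_connected V ES I"
  proof -
    assume D: "(\<forall>v\<in>I. card (N v) = 1) \<or> (\<forall>v\<in>I. card (N v) = card K - 1)"
    have le1: "\<And>u v. u \<in> I \<Longrightarrow> v \<in> I \<Longrightarrow> card (N u - N v) \<le> 1"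
    proof -
      fix u v assume u: "u \<in> I" and v: "v \<in> I"
      show "card (N u - N v) \<le> 1"
        using D
      proof
        assume "\<forall>v\<in>I. card (N v) = 1"
        then show ?thesis using card_mono[OF finN[OF u], of "N u - N v"] u by auto
      next
        assume a: "\<forall>v\<in>I. card (N v) = card K - 1"
        have "card (N u - N v) \<le> card (K - N v)" using NK u fin(2) by (intro card_mono) auto
        also have "\<dots> = card K - card (N v)" using NK[OF v] finN[OF v] by (rule card_Diff_subset[rotated])
        also have "\<dots> \<le> 1" using a v by simp
        finally show ?thesis .
      qed
    qed
    have simple: "factor_simple V ES I"
      unfolding factor_simple_def
    proof (intro ballI impI)
      fix u v assume u: "u \<in> I" and v: "v \<in> I" and uv: "u \<noteq> v"
      show "sigma V ES u v \<le> 1" unfolding sig[OF u v uv]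
        using le1[OF u v] le1[OF v u] mult_le_mono[of "card (N u - N v)" 1 "card (N v - N u)" 1] by simp
    qed
    have notall: "\<And>x. x \<in> K \<Longrightarrow> \<exists>w\<in>I. x \<notin> N w"
    proof (rule ccontr)
      fix x assume x: "x \<in> K" and na: "\<not> (\<exists>w\<in>I. x \<notin> N w)"
      then have allx: "\<And>w. w \<in> I \<Longrightarrow> x \<in> N w" by blast
      have cimg: "card ((\<lambda>k. N (r k)) ` K) = card K" using card_image[OF injNr] .
      show False using D
      proof
        assume a: "\<forall>v\<in>I. card (N v) = 1"
        have "(\<lambda>k. N (r k)) ` K \<subseteq> {{x}}"
        proof
          fix Y assume "Y \<in> (\<lambda>k. N (r k)) ` K"
          then obtain k where k: "k \<in> K" "Y = N (r k)" by blast
          have "N (r k) = {x}" using one_elem[of "N (r k)" x] a allx r k by blast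
          then show "Y \<in> {{x}}" using k by simp
        qed
        then have "card ((\<lambda>k. N (r k)) ` K) \<le> 1" using card_mono[of "{{x}}"] by fastforce
        then show False using cimg cK by simp
      next
        assume a: "\<forall>v\<in>I. card (N v) = card K - 1"
        have "(\<lambda>k. N (r k)) ` K \<subseteq> (\<lambda>p. K - {p}) ` (K - {x})"
        proof
          fix Y assume "Y \<in> (\<lambda>k. N (r k)) ` K"
          then obtain k where k: "k \<in> K" "Y = N (r k)" by blast
          have rk: "r k \<in> I" using r k by blast
          have "card (K - N (r k)) = card K - card (N (r k))"
            using NK[OF rk] finN[OF rk] by (rule card_Diff_subset[rotated])
          also have "\<dots> = 1" using a rk cK by simp
          finally obtain p where p: "K - N (r k) = {p}" by (rule card_1_singletonE)
          have "p \<noteq> x" using p allx[OF rk] by blast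
          moreover have "p \<in> K" using p by blast
          moreover have "N (r k) = K - {p}" using p NK[OF rk] by blast
          ultimately show "Y \<in> (\<lambda>p. K - {p}) ` (K - {x})" using k by blast
        qed
        then have "card ((\<lambda>k. N (r k)) ` K) \<le> card ((\<lambda>p. K - {p}) ` (K - {x}))"
          using fin(2) by (intro card_mono) auto
        also have "\<dots> \<le> card (K - {x})" using card_image_le fin(2) by blast
        also have "\<dots> = card K - 1" using x fin(2) by simp
        finally show False using cimg cK by simp
      qed
    qed
    have active: "active V ES"
      unfolding active_def
    proof
      fix x assume x: "x \<in> V"
      show "active_vertex V ES x"
      proof (cases "x \<in> I")
        case True
        obtain k' where k': "k' \<in> K" "k' \<noteq> rho x" using other rhoK True by blast
        have w: "r k' \<in> I" "rho x \<noteq> rho (r k')" using r k' by auto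
        then obtain b c where "b \<in> N x - N (r k')" "c \<in> N (r k') - N x"
          using noncomp[OF True w(1) w(2)] by blast
        then show ?thesis using act True w(1) by blast
      next
        case False
        then have xK: "x \<in> K" using x VKI by blast
        obtain u where u: "u \<in> I" "x \<in> N u" using SK xK unfolding N_def by blast
        obtain w where w: "w \<in> I" "x \<notin> N w" using notall xK by blast
        have ceq: "card (N w) = card (N u)" using D u(1) w(1) by auto
        have "N w - N u \<noteq> {}"
        proof
          assume "N w - N u = {}"
          then have "N w \<subseteq> N u - {x}" using w by blast
          then have "card (N w) \<le> card (N u - {x})" using finN[OF u(1)] card_mono by blast
          also have "\<dots> < card (N u)" using u finN[OF u(1)] by (rule_tac card_Diff1_less) auto
          finally show False using ceq by simp
        qed
        then obtain c where "c \<in> N w - N u" by blast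
        then show ?thesis using act[of u w x c] u w by blast
      qed
    qed
    show ?thesis using active simple conn by blast
  qed
  define E2 where "E2 = complement V (inverse ER K I)"
  have C2: "split_graph V E2 K I" using compl_sg[OF R] unfolding E2_def .
  have c2iff: "\<And>v k. v \<in> I \<Longrightarrow> k \<in> K \<Longrightarrow> {v,k} \<in> E2 \<longleftrightarrow> {v,k} \<notin> ER"
    using compl_iff[OF R] unfolding E2_def by blast
  have NE2: "\<And>v. v \<in> I \<Longrightarrow> nbhd E2 v = K - {rho v}"
  proof -
    fix v assume v: "v \<in> I"
    have sub: "nbhd E2 v \<subseteq> K" using sg_nbhd_I[OF C2 v] .
    show "nbhd E2 v = K - {rho v}"
    proof (rule set_eqI)
      fix k show "k \<in> nbhd E2 v \<longleftrightarrow> k \<in> K - {rho v}"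
      proof (cases "k \<in> K")
        case True
        have "k \<in> nbhd E2 v \<longleftrightarrow> {v,k} \<in> E2" by (rule nb_iff)
        also have "\<dots> \<longleftrightarrow> {v,k} \<notin> ER" using c2iff v True by blast
        also have "\<dots> \<longleftrightarrow> k \<notin> nbhd ER v" using nb_iff by metis
        also have "\<dots> \<longleftrightarrow> k \<noteq> rho v" using NR v by simp
        finally show ?thesis using True by blast
      next
        case False then show ?thesis using sub by blast
      qed
    qed
  qed
  have degSK: "\<And>k. k \<in> K \<Longrightarrow> card K \<le> deg ES k"
  proof -
    fix k assume k: "k \<in> K"
    then obtain u where u: "u \<in> I" "k \<in> nbhd ES u" using SK by blast
    then have "{u,k} \<in> ES" using nb_iff by metis
    then show "card K \<le> deg ES k" using degK[OF S k u(1)] by blast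
  qed
  have degRK: "\<And>k. k \<in> K \<Longrightarrow> card K \<le> deg ER k"
  proof -
    fix k assume k: "k \<in> K"
    then obtain u where u: "u \<in> I" "k \<in> nbhd ER u" using RK by blast
    then have "{u,k} \<in> ER" using nb_iff by metis
    then show "card K \<le> deg ER k" using degK[OF R k u(1)] by blast
  qed
  have deg2K: "\<And>k. k \<in> K \<Longrightarrow> card K \<le> deg E2 k"
  proof -
    fix k assume k: "k \<in> K"
    obtain k' where k': "k' \<in> K" "k' \<noteq> k" using other k by blast
    have w: "r k' \<in> I" "rho (r k') = k'" using r k' by auto
    have "k \<notin> nbhd ER (r k')" using NR[OF w(1)] w(2) k' by simp
    then have "{r k', k} \<notin> ER" using nb_iff by metis
    then have "{r k', k} \<in> E2" using c2iff w(1) k by blast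
    then show "card K \<le> deg E2 k" using degK[OF C2 k w(1)] by blast
  qed
  have deg2I: "\<And>v. v \<in> I \<Longrightarrow> deg E2 v = card K - 1"
    unfolding deg_def using NE2 rhoK fin(2) by (simp add: card_Diff_singleton)
  show ?thesis unfolding E2_def[symmetric]
  proof
    assume L: "active V ES \<and> factor_simple V ES I \<and> factor_connected V ES I"
    have simple: "factor_simple V ES I" using L by blast
    have diff1: "\<And>u v. u \<in> I \<Longrightarrow> v \<in> I \<Longrightarrow> rho u \<noteq> rho v \<Longrightarrow>
        card (N u - N v) = 1 \<and> card (N v - N u) = 1"
    proof -
      fix u v assume u: "u \<in> I" and v: "v \<in> I" and ne: "rho u \<noteq> rho v"
      then have uv: "u \<noteq> v" by blast
      have le: "card (N u - N v) * card (N v - N u) \<le> 1"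
        using simple u v uv sig unfolding factor_simple_def by metis
      have nz: "card (N u - N v) * card (N v - N u) \<noteq> 0" using key[OF u v uv] ne by blast
      have "card (N u - N v) * card (N v - N u) = 1" using le nz by linarith
      then show "card (N u - N v) = 1 \<and> card (N v - N u) = 1" by simp
    qed
    have ceq0: "\<And>u v. u \<in> I \<Longrightarrow> v \<in> I \<Longrightarrow> rho u \<noteq> rho v \<Longrightarrow> card (N u) = card (N v)"
    proof -
      fix u v assume u: "u \<in> I" and v: "v \<in> I" and ne: "rho u \<noteq> rho v"
      show "card (N u) = card (N v)"
        using card_diff_eq[OF finN[OF u] finN[OF v]] diff1[OF u v ne] by simp
    qed
    have ceq: "\<And>u v. u \<in> I \<Longrightarrow> v \<in> I \<Longrightarrow> card (N u) = card (N v)"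
    proof -
      fix u v assume u: "u \<in> I" and v: "v \<in> I"
      show "card (N u) = card (N v)"
      proof (cases "rho u = rho v")
        case False then show ?thesis using ceq0 u v by blast
      next
        case True
        obtain k' where k': "k' \<in> K" "k' \<noteq> rho u" using other rhoK u by blast
        have w: "r k' \<in> I" "rho (r k') = k'" using r k' by auto
        have "card (N u) = card (N (r k'))" using ceq0[OF u w(1)] k' w by simp
        moreover have "card (N v) = card (N (r k'))" using ceq0[OF v w(1)] k' w True by simp
        ultimately show ?thesis by simp
      qed
    qed
    have same: "\<And>u v. u \<in> I \<Longrightarrow> v \<in> I \<Longrightarrow> rho u = rho v \<Longrightarrow> N u = N v"
    proof -
      fix u v assume u: "u \<in> I" and v: "v \<in> I" and eq: "rho u = rho v"
      show "N u = N v"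
      proof (cases "u = v")
        case True then show ?thesis by simp
      next
        case False
        have "card (N u - N v) * card (N v - N u) = 0" using key[OF u v False] eq by blast
        then have "card (N u - N v) = 0 \<or> card (N v - N u) = 0" by simp
        then have "N u \<subseteq> N v \<or> N v \<subseteq> N u" using finN u v by auto
        then show ?thesis using card_subset_eq finN u v ceq[OF u v] by metis
      qed
    qed
    define F where "F k = N (r k)" for k
    have Fsub: "\<forall>k\<in>K. F k \<subseteq> K" using NK r unfolding F_def by blast
    have Fd1: "\<forall>k\<in>K. \<forall>k'\<in>K. k \<noteq> k' \<longrightarrow> card (F k - F k') = 1"
      using diff1 r unfolding F_def by metis
    have NF: "\<And>v. v \<in> I \<Longrightarrow> N v = F (rho v)"
      unfolding F_def using same r rhoK by metis
    have Fun: "(\<Union>k\<in>K. F k) = K"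
    proof
      show "(\<Union>k\<in>K. F k) \<subseteq> K" using Fsub by blast
      show "K \<subseteq> (\<Union>k\<in>K. F k)"
      proof
        fix x assume "x \<in> K"
        then obtain v where v: "v \<in> I" "x \<in> N v" using SK unfolding N_def by blast
        then have "x \<in> F (rho v)" using NF by blast
        then show "x \<in> (\<Union>k\<in>K. F k)" using rhoK v(1) by blast
      qed
    qed
    have injF: "inj_on F K" using injNr unfolding F_def .
    have ES_iff: "\<And>v k. v \<in> I \<Longrightarrow> {v,k} \<in> ES \<longleftrightarrow> k \<in> F (rho v)"
      using NF nb_iff unfolding N_def by metis
    have ER_iff: "\<And>v k. v \<in> I \<Longrightarrow> {v,k} \<in> ER \<longleftrightarrow> k = rho v"
      using NR nb_iff by (metis singleton_iff)
    from family[OF fin(2) cK Fsub Fd1 Fun]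
    show "graph_iso V ES V ER \<or> graph_iso V ES V E2"
    proof
      assume c1: "\<forall>k\<in>K. card (F k) = 1"
      define phi where "phi k = the_elem (F k)" for k
      have Fphi: "\<And>k. k \<in> K \<Longrightarrow> F k = {phi k}"
      proof -
        fix k assume "k \<in> K"
        then obtain y where "F k = {y}" using c1 card_1_singletonE by blast
        then show "F k = {phi k}" by (simp add: phi_def)
      qed
      have phiK: "phi ` K \<subseteq> K" using Fphi Fsub by blast
      have injphi: "inj_on phi K"
      proof (rule inj_onI)
        fix k k' assume "k \<in> K" "k' \<in> K" "phi k = phi k'"
        then have "F k = F k'" using Fphi by metis
        then show "k = k'" using injF \<open>k \<in> K\<close> \<open>k' \<in> K\<close> inj_on_def by metis
      qed
      have bphi: "bij_betw phi K K" unfolding bij_betw_def using endo_inj_surj[OF fin(2) phiK injphi] injphi by blast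
      define g where "g = the_inv_into K phi"
      have bg: "bij_betw g K K" unfolding g_def by (rule bij_betw_the_inv_into[OF bphi])
      have "\<forall>v\<in>I. \<forall>k\<in>K. {v,k} \<in> ES \<longleftrightarrow> {v, g k} \<in> ER"
      proof (intro ballI)
        fix v k assume v: "v \<in> I" and k: "k \<in> K"
        have rv: "rho v \<in> K" using rhoK v .
        have "{v,k} \<in> ES \<longleftrightarrow> k = phi (rho v)" using ES_iff[OF v] Fphi[OF rv] by simp
        also have "\<dots> \<longleftrightarrow> g k = rho v"
        proof
          assume "k = phi (rho v)"
          then show "g k = rho v" unfolding g_def using the_inv_into_f_f[OF injphi rv] by simp
        next
          assume "g k = rho v"
          moreover have "phi (g k) = k" unfolding g_def using f_the_inv_into_f_bij_betw[OF bphi] k by blast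
          ultimately show "k = phi (rho v)" by simp
        qed
        also have "\<dots> \<longleftrightarrow> {v, g k} \<in> ER" using ER_iff[OF v] by metis
        finally show "{v,k} \<in> ES \<longleftrightarrow> {v, g k} \<in> ER" .
      qed
      then have "graph_iso V ES V ER" using iso_split[OF S R bg] by blast
      then show ?thesis by blast
    next
      assume c2: "\<forall>k\<in>K. card (F k) = card K - 1"
      have c2': "\<And>k. k \<in> K \<Longrightarrow> card (K - F k) = 1"
      proof -
        fix k assume k: "k \<in> K"
        have "card (K - F k) = card K - card (F k)"
          using Fsub k fin(2) by (intro card_Diff_subset) (auto intro: finite_subset)
        then show "card (K - F k) = 1" using c2 k cK by simp
      qed
      define gam where "gam k = the_elem (K - F k)" for k
      have Fgam: "\<And>k. k \<in> K \<Longrightarrow> F k = K - {gam k} \<and> gam k \<in> K"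
      proof -
        fix k assume k: "k \<in> K"
        then obtain y where y: "K - F k = {y}" using c2' card_1_singletonE by blast
        then have "gam k = y" by (simp add: gam_def)
        then show "F k = K - {gam k} \<and> gam k \<in> K" using y Fsub k by blast
      qed
      have gamK: "gam ` K \<subseteq> K" using Fgam by blast
      have injgam: "inj_on gam K"
      proof (rule inj_onI)
        fix k k' assume "k \<in> K" "k' \<in> K" "gam k = gam k'"
        then have "F k = F k'" using Fgam by metis
        then show "k = k'" using injF \<open>k \<in> K\<close> \<open>k' \<in> K\<close> inj_on_def by metis
      qed
      have bgam: "bij_betw gam K K" unfolding bij_betw_def using endo_inj_surj[OF fin(2) gamK injgam] injgam by blast
      define g where "g = the_inv_into K gam"
      have bg: "bij_betw g K K" unfolding g_def by (rule bij_betw_the_inv_into[OF bgam])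
      have "\<forall>v\<in>I. \<forall>k\<in>K. {v,k} \<in> ES \<longleftrightarrow> {v, g k} \<in> E2"
      proof (intro ballI)
        fix v k assume v: "v \<in> I" and k: "k \<in> K"
        have rv: "rho v \<in> K" using rhoK v .
        have gk: "g k \<in> K" using bg k bij_betwE by blast
        have "{v,k} \<in> ES \<longleftrightarrow> k \<noteq> gam (rho v)" using ES_iff[OF v] Fgam[OF rv] k by simp
        also have "\<dots> \<longleftrightarrow> g k \<noteq> rho v"
        proof
          assume a: "k \<noteq> gam (rho v)"
          show "g k \<noteq> rho v"
          proof
            assume "g k = rho v"
            moreover have "gam (g k) = k" unfolding g_def using f_the_inv_into_f_bij_betw[OF bgam] k by blast
            ultimately show False using a by simp
          qed
        next
          assume a: "g k \<noteq> rho v"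
          show "k \<noteq> gam (rho v)"
          proof
            assume "k = gam (rho v)"
            then have "g k = rho v" unfolding g_def using the_inv_into_f_f[OF injgam rv] by simp
            then show False using a by simp
          qed
        qed
        also have "\<dots> \<longleftrightarrow> {v, g k} \<notin> ER" using ER_iff[OF v] by metis
        also have "\<dots> \<longleftrightarrow> {v, g k} \<in> E2" using c2iff[OF v gk] by blast
        finally show "{v,k} \<in> ES \<longleftrightarrow> {v, g k} \<in> E2" .
      qed
      then have "graph_iso V ES V E2" using iso_split[OF S C2 bg] by blast
      then show ?thesis by blast
    qed
  next
    assume "graph_iso V ES V ER \<or> graph_iso V ES V E2"
    then have "(\<forall>v\<in>I. card (N v) = 1) \<or> (\<forall>v\<in>I. card (N v) = card K - 1)"
    proof
      assume iso: "graph_iso V ES V ER"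
      have sub: "{x\<in>V. deg ES x = 1} \<subseteq> I"
      proof
        fix x assume x: "x \<in> {x\<in>V. deg ES x = 1}"
        show "x \<in> I"
        proof (rule ccontr)
          assume "x \<notin> I"
          then have "x \<in> K" using x VKI by blast
          then show False using degSK x cK by fastforce
        qed
      qed
      have eq: "{x\<in>V. deg ER x = 1} = I"
      proof
        show "{x\<in>V. deg ER x = 1} \<subseteq> I"
        proof
          fix x assume x: "x \<in> {x\<in>V. deg ER x = 1}"
          show "x \<in> I"
          proof (rule ccontr)
            assume "x \<notin> I"
            then have "x \<in> K" using x VKI by blast
            then show False using degRK x cK by fastforce
          qed
        qed
        show "I \<subseteq> {x\<in>V. deg ER x = 1}" using Rdeg VKI by blast
      qed
      have "\<forall>v\<in>I. deg ES v = 1" using iso_degset[OF S R iso sub eq] .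
      then show ?thesis unfolding deg_def N_def by blast
    next
      assume iso: "graph_iso V ES V E2"
      have sub: "{x\<in>V. deg ES x = card K - 1} \<subseteq> I"
      proof
        fix x assume x: "x \<in> {x\<in>V. deg ES x = card K - 1}"
        show "x \<in> I"
        proof (rule ccontr)
          assume "x \<notin> I"
          then have "x \<in> K" using x VKI by blast
          then show False using degSK x cK by fastforce
        qed
      qed
      have eq: "{x\<in>V. deg E2 x = card K - 1} = I"
      proof
        show "{x\<in>V. deg E2 x = card K - 1} \<subseteq> I"
        proof
          fix x assume x: "x \<in> {x\<in>V. deg E2 x = card K - 1}"
          show "x \<in> I"
          proof (rule ccontr)
            assume "x \<notin> I"
            then have "x \<in> K" using x VKI by blast
            then show False using deg2K x cK by fastforce
          qed
        qed
        show "I \<subseteq> {x\<in>V. deg E2 x = card K - 1}" using deg2I VKI by blast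
      qed
      have "\<forall>v\<in>I. deg ES v = card K - 1" using iso_degset[OF S C2 iso sub eq] .
      then show ?thesis unfolding deg_def N_def by blast
    qed
    then show "active V ES \<and> factor_simple V ES I \<and> factor_connected V ES I" by (rule backward)
  qed
qed

end
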